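(* Let $(R,\mathfrak m)$ be a one-dimensional Cohen–Macaulay local ring, let $I$ be an $\mathfrak m$-primary ideal of $R$, and let $x\in\mathfrak m$ be a parameter of $R$. (i) If $R/x^nI$ is a Gorenstein ring for some $n\ge 1$, then $R/I$ is a Gorenstein ring and $(x^nI:_R\mathfrak m)=x^n(I:_R\mathfrak m)$. (ii) Assume that $I\subset xR$. If $R/I$ is a Gorenstein ring, then $R/x^nI$ is a Gorenstein ring for all $n\ge 1$. *)

theory Defs
  imports Main "HOL-Library.Extended_Nat"
begin

text \<open>Commutative ring theory for the ring given by the whole type 'a (class comm_ring_1).
  Ideals are represented as subsets of the type.\<close>

definition is_ideal :: "'a::comm_ring_1 set \<Rightarrow> bool" where
  "is_ideal I \<longleftrightarrow> 0 \<in> I \<and> (\<forall>a\<in>I. \<forall>b\<in>I. a + b \<in> I) \<and> (\<forall>a\<in>I. \<forall>r. r * a \<in> I)"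

definition ideal_gen :: "'a::comm_ring_1 set \<Rightarrow> 'a set" where
  "ideal_gen F = \<Inter>{J. is_ideal J \<and> F \<subseteq> J}"

definition prime_ideal :: "'a::comm_ring_1 set \<Rightarrow> bool" where
  "prime_ideal P \<longleftrightarrow> is_ideal P \<and> P \<noteq> UNIV \<and> (\<forall>a b. a * b \<in> P \<longrightarrow> a \<in> P \<or> b \<in> P)"

definition maximal_ideal :: "'a::comm_ring_1 set \<Rightarrow> bool" where
  "maximal_ideal M \<longleftrightarrow> is_ideal M \<and> M \<noteq> UNIV \<and>
     (\<forall>J. is_ideal J \<and> M \<subseteq> J \<longrightarrow> J = M \<or> J = UNIV)"

definition noetherian_ring :: "'a::comm_ring_1 itself \<Rightarrow> bool" where
  "noetherian_ring _ \<longleftrightarrow> (\<forall>I::'a set. is_ideal I \<longrightarrow> (\<exists>F. finite F \<and> I = ideal_gen F))"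

definition local_ring_max :: "'a::comm_ring_1 set \<Rightarrow> bool" where
  "local_ring_max m \<longleftrightarrow> maximal_ideal m \<and> (\<forall>M. maximal_ideal M \<longrightarrow> M = m)"

text \<open>Krull dimension of R/J: supremum of lengths of chains of primes containing J.\<close>
definition ideal_dim :: "'a::comm_ring_1 set \<Rightarrow> enat" where
  "ideal_dim J = Sup {enat n | n. \<exists>P::nat \<Rightarrow> 'a set.
      (\<forall>i\<le>n. prime_ideal (P i) \<and> J \<subseteq> P i) \<and> (\<forall>i<n. P i \<subset> P (Suc i))}"

definition principal :: "'a::comm_ring_1 \<Rightarrow> 'a set" where
  "principal x = {x * r | r. True}"

definition scale_ideal :: "'a::comm_ring_1 \<Rightarrow> 'a set \<Rightarrow> 'a set" where
  "scale_ideal a J = {a * j | j. j \<in> J}"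

definition colon :: "'a::comm_ring_1 set \<Rightarrow> 'a set \<Rightarrow> 'a set" where
  "colon I m = {r. \<forall>a\<in>m. r * a \<in> I}"

definition radical :: "'a::comm_ring_1 set \<Rightarrow> 'a set" where
  "radical I = {a. \<exists>n. a ^ n \<in> I}"

definition m_primary :: "'a::comm_ring_1 set \<Rightarrow> 'a set \<Rightarrow> bool" where
  "m_primary m I \<longleftrightarrow> is_ideal I \<and> I \<noteq> UNIV \<and> radical I = m"

definition regular_seq :: "'a::comm_ring_1 set \<Rightarrow> 'a list \<Rightarrow> bool" where
  "regular_seq m xs \<longleftrightarrow> set xs \<subseteq> m \<and> ideal_gen (set xs) \<noteq> UNIV \<and>
     (\<forall>i<length xs. \<forall>y. xs ! i * y \<in> ideal_gen (set (take i xs)) \<longrightarrow> y \<in> ideal_gen (set (take i xs)))"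

definition depth :: "'a::comm_ring_1 set \<Rightarrow> enat" where
  "depth m = Sup {enat (length xs) | xs. regular_seq m xs}"

definition cohen_macaulay :: "'a::comm_ring_1 set \<Rightarrow> bool" where
  "cohen_macaulay m \<longleftrightarrow> depth m = ideal_dim ({0} :: 'a set)"

definition parameter :: "'a::comm_ring_1 set \<Rightarrow> 'a \<Rightarrow> bool" where
  "parameter m x \<longleftrightarrow> x \<in> m \<and> ideal_dim (principal x) + 1 = ideal_dim ({0} :: 'a set)"

text \<open>R/J (J an m-primary ideal, so R/J is an Artinian local ring) is Gorenstein:
  its socle (J : m)/J is a simple module, i.e. a one-dimensional R/m-vector space.\<close>
definition gorenstein_quot :: "'a::comm_ring_1 set \<Rightarrow> 'a set \<Rightarrow> bool" where
  "gorenstein_quot m J \<longleftrightarrow> J \<subset> colon J m \<and>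
     (\<forall>K. is_ideal K \<and> J \<subseteq> K \<and> K \<subseteq> colon J m \<longrightarrow> K = J \<or> K = colon J m)"

end

theory Submission
  imports Defs
begin

lemma idI0: "is_ideal I \<Longrightarrow> 0 \<in> I" by (simp add: is_ideal_def)
lemma idIadd: "is_ideal I \<Longrightarrow> a \<in> I \<Longrightarrow> b \<in> I \<Longrightarrow> a + b \<in> I" by (simp add: is_ideal_def)
lemma idImul: "is_ideal I \<Longrightarrow> a \<in> I \<Longrightarrow> r * a \<in> I" by (simp add: is_ideal_def)
lemma idImul2: "is_ideal I \<Longrightarrow> a \<in> I \<Longrightarrow> a * r \<in> I" by (metis idImul mult.commute)

lemma ideal_sum:
  assumes "is_ideal P"
  shows "is_ideal {p + r * a | p r. p \<in> P}"
  unfolding is_ideal_def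
proof (intro conjI ballI allI)
  show "0 \<in> {p + r * a | p r. p \<in> P}" using idI0[OF assms] by (intro CollectI exI[of _ 0] exI[of _ 0]) simp
next
  fix u v assume "u \<in> {p + r * a | p r. p \<in> P}" "v \<in> {p + r * a | p r. p \<in> P}"
  then obtain p r q s where "u = p + r*a" "v = q + s*a" "p \<in> P" "q \<in> P" by blast
  then show "u + v \<in> {p + r * a | p r. p \<in> P}"
    by (intro CollectI exI[of _ "p+q"] exI[of _ "r+s"]) (auto simp: algebra_simps idIadd[OF assms])
next
  fix u t assume "u \<in> {p + r * a | p r. p \<in> P}"
  then obtain p r where "u = p + r*a" "p \<in> P" by blast
  hence "t * u = t*p + (t*r)*a" "t*p \<in> P" using idImul[OF assms] by (auto simp: algebra_simps)
  then show "t * u \<in> {p + r * a | p r. p \<in> P}" by blast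
qed

lemma zorn_ideal:
  fixes z :: "'a::comm_ring_1"
  assumes "is_ideal J0" "\<forall>k. z^k \<notin> J0"
  shows "\<exists>P. is_ideal P \<and> J0 \<subseteq> P \<and> (\<forall>k. z^k \<notin> P) \<and>
     (\<forall>Q. is_ideal Q \<and> P \<subseteq> Q \<and> (\<forall>k. z^k \<notin> Q) \<longrightarrow> Q = P)"
proof -
  let ?A = "{J. is_ideal J \<and> J0 \<subseteq> J \<and> (\<forall>k. z^k \<notin> J)}"
  have "\<exists>M\<in>?A. \<forall>X\<in>?A. M \<subseteq> X \<longrightarrow> X = M"
  proof (rule subset_Zorn_nonempty)
    show "?A \<noteq> {}" using assms by blast
  next
    fix C assume C: "C \<noteq> {}" "subset.chain ?A C"
    hence CA: "C \<subseteq> ?A" and ch: "\<forall>X\<in>C. \<forall>Y\<in>C. X \<subseteq> Y \<or> Y \<subseteq> X"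
      by (auto simp: subset.chain_def)
    obtain J1 where J1: "J1 \<in> C" using C by blast
    have "is_ideal (\<Union>C)"
      unfolding is_ideal_def
    proof (intro conjI ballI allI)
      show "0 \<in> \<Union>C" using J1 CA idI0 by blast
    next
      fix a b assume "a \<in> \<Union>C" "b \<in> \<Union>C"
      then obtain X Y where "X \<in> C" "Y \<in> C" "a \<in> X" "b \<in> Y" by blast
      have iX: "is_ideal X" "is_ideal Y" using CA \<open>X \<in> C\<close> \<open>Y \<in> C\<close> by auto
      from ch \<open>X \<in> C\<close> \<open>Y \<in> C\<close> have "X \<subseteq> Y \<or> Y \<subseteq> X" by blast
      then show "a + b \<in> \<Union>C"
      proof
        assume "X \<subseteq> Y" thus ?thesis using idIadd[OF iX(2)] \<open>a \<in> X\<close> \<open>b \<in> Y\<close> \<open>Y \<in> C\<close> by blast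
      next
        assume "Y \<subseteq> X" thus ?thesis using idIadd[OF iX(1)] \<open>a \<in> X\<close> \<open>b \<in> Y\<close> \<open>X \<in> C\<close> by blast
      qed
    next
      fix a r assume "a \<in> \<Union>C"
      then obtain X where "X \<in> C" "a \<in> X" by blast
      with CA show "r * a \<in> \<Union>C" using idImul by blast
    qed
    moreover have "J0 \<subseteq> \<Union>C" using J1 CA by blast
    moreover have "\<forall>k. z^k \<notin> \<Union>C" using CA by blast
    ultimately show "\<Union>C \<in> ?A" by blast
  qed
  then obtain M where "M \<in> ?A" "\<forall>X\<in>?A. M \<subseteq> X \<longrightarrow> X = M" by blast
  moreover have "\<forall>Q. is_ideal Q \<and> M \<subseteq> Q \<and> (\<forall>k. z^k \<notin> Q) \<longrightarrow> Q = M"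
  proof (intro allI impI)
    fix Q assume "is_ideal Q \<and> M \<subseteq> Q \<and> (\<forall>k. z^k \<notin> Q)"
    moreover have "J0 \<subseteq> M" using \<open>M \<in> ?A\<close> by simp
    ultimately have "Q \<in> ?A" "M \<subseteq> Q" by auto
    thus "Q = M" using \<open>\<forall>X\<in>?A. M \<subseteq> X \<longrightarrow> X = M\<close> by blast
  qed
  ultimately show ?thesis by blast
qed

lemma zorn_prime:
  fixes z :: "'a::comm_ring_1"
  assumes P: "is_ideal P" "\<forall>k. z^k \<notin> P"
    and mx: "\<forall>Q. is_ideal Q \<and> P \<subseteq> Q \<and> (\<forall>k. z^k \<notin> Q) \<longrightarrow> Q = P"
  shows "prime_ideal P"
  unfolding prime_ideal_def
proof (intro conjI allI impI)
  show "is_ideal P" by fact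
  show "P \<noteq> UNIV" using P(2)[rule_format, of 0] by auto
next
  fix a b assume ab: "a * b \<in> P"
  show "a \<in> P \<or> b \<in> P"
  proof (rule ccontr)
    assume "\<not> (a \<in> P \<or> b \<in> P)"
    hence na: "a \<notin> P" and nb: "b \<notin> P" by auto
    have sub: "\<exists>k. z^k \<in> {p + r * c | p r. p \<in> P}" if "c \<notin> P" for c
    proof (rule ccontr)
      assume "\<not> ?thesis"
      moreover have "P \<subseteq> {p + r * c | p r. p \<in> P}"
      proof
        fix y assume "y \<in> P" thus "y \<in> {p + r * c | p r. p \<in> P}" by (intro CollectI exI[of _ y] exI[of _ 0]) simp
      qed
      ultimately have "{p + r * c | p r. p \<in> P} = P"
        using mx ideal_sum[OF P(1)] by blast
      moreover have "c \<in> {p + r * c | p r. p \<in> P}"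
        using idI0[OF P(1)] by (intro CollectI exI[of _ 0] exI[of _ 1]) simp
      ultimately show False using that by simp
    qed
    obtain i p r where i: "z^i = p + r*a" "p \<in> P" using sub[OF na] by blast
    obtain j q s where j: "z^j = q + s*b" "q \<in> P" using sub[OF nb] by blast
    have "z^(i+j) = p*q + p*(s*b) + q*(r*a) + (r*s)*(a*b)"
      by (simp add: power_add i j algebra_simps)
    also have "\<dots> \<in> P"
    proof -
      have "p*q \<in> P" "p*(s*b) \<in> P" "q*(r*a) \<in> P" "(r*s)*(a*b) \<in> P"
        using i(2) j(2) ab idImul2[OF P(1)] idImul[OF P(1)] by auto
      thus ?thesis using idIadd[OF P(1)] by simp
    qed
    finally show False using P(2) by blast
  qed
qed


lemma ideal_gen_empty: "ideal_gen ({}::'a::comm_ring_1 set) = {0}"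
proof -
  have "is_ideal ({0}::'a set)" by (simp add: is_ideal_def)
  hence "ideal_gen ({}::'a set) \<subseteq> {0}" unfolding ideal_gen_def by blast
  moreover have "0 \<in> ideal_gen ({}::'a set)" unfolding ideal_gen_def using idI0 by blast
  ultimately show ?thesis by blast
qed

lemma principal_ideal: "is_ideal (principal x)"
  unfolding is_ideal_def principal_def
proof (intro conjI ballI allI)
  show "0 \<in> {x * r |r. True}" by (intro CollectI exI[of _ 0]) simp
next
  fix a b assume "a \<in> {x * r |r. True}" "b \<in> {x * r |r. True}"
  then obtain r s where "a = x*r" "b = x*s" by blast
  thus "a + b \<in> {x * r |r. True}" by (intro CollectI exI[of _ "r+s"]) (simp add: algebra_simps)
next
  fix a t assume "a \<in> {x * r |r. True}"
  then obtain r where "a = x*r" by blast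
  thus "t * a \<in> {x * r |r. True}" by (intro CollectI exI[of _ "t*r"]) (simp add: algebra_simps)
qed

lemma exists_nzd:
  fixes m :: "'a::comm_ring_1 set"
  assumes dim1: "ideal_dim ({0} :: 'a set) = 1" and CM: "cohen_macaulay m"
  shows "\<exists>z\<in>m. \<forall>y. z * y = 0 \<longrightarrow> y = 0"
proof -
  have d: "depth m = 1" using CM dim1 by (simp add: cohen_macaulay_def)
  have "\<exists>xs. regular_seq m xs \<and> length xs \<ge> 1"
  proof (rule ccontr)
    assume "\<not> ?thesis"
    hence "\<forall>s\<in>{enat (length xs) | xs. regular_seq m xs}. s \<le> 0"
      by (auto simp: zero_enat_def not_le)
    hence "depth m \<le> 0" unfolding depth_def by (meson Sup_least)
    thus False using d by simp
  qed
  then obtain xs where xs: "regular_seq m xs" "length xs \<ge> 1" by blast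
  have "xs ! 0 \<in> m" proof - have "set xs \<subseteq> m" using xs(1) unfolding regular_seq_def by blast moreover have "0 < length xs" using xs(2) by linarith ultimately show ?thesis using nth_mem[of 0 xs] by blast qed
  moreover have "\<forall>y. xs ! 0 * y = 0 \<longrightarrow> y = 0"
  proof (intro allI impI)
    fix y assume "xs ! 0 * y = 0"
    moreover have "0 < length xs" using xs(2) by linarith
    moreover have "\<forall>i<length xs. \<forall>y. xs ! i * y \<in> ideal_gen (set (take i xs)) \<longrightarrow> y \<in> ideal_gen (set (take i xs))"
      using xs(1) unfolding regular_seq_def by blast
    ultimately show "y = 0" by (auto simp: ideal_gen_empty)
  qed
  ultimately show ?thesis by blast
qed

lemma param_nzd:
  fixes m :: "'a::comm_ring_1 set" and x :: 'a
  assumes loc: "local_ring_max m"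
    and dim1: "ideal_dim ({0} :: 'a set) = 1"
    and CM: "cohen_macaulay m"
    and par: "parameter m x"
    and xy: "x * y = 0"
  shows "y = 0"
proof -
  obtain z where z: "z \<in> m" "\<forall>y. z * y = 0 \<longrightarrow> y = 0" using exists_nzd[OF dim1 CM] by blast
  have d0: "ideal_dim (principal x) = 0"
  proof -
    have e: "ideal_dim (principal x) + 1 = 1" using par dim1 unfolding parameter_def by simp
    show ?thesis
    proof (cases "ideal_dim (principal x)")
      case (enat k) thus ?thesis using e by (simp add: one_enat_def zero_enat_def)
    next
      case infinity thus ?thesis using e by simp
    qed
  qed
  have "\<exists>k. z^k \<in> principal x"
  proof (rule ccontr)
    assume "\<not> ?thesis"
    then obtain P where P: "is_ideal P" "principal x \<subseteq> P" "\<forall>k. z^k \<notin> P"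
      "\<forall>Q. is_ideal Q \<and> P \<subseteq> Q \<and> (\<forall>k. z^k \<notin> Q) \<longrightarrow> Q = P"
      using zorn_ideal[OF principal_ideal[of x], of z] by blast
    have pP: "prime_ideal P" using zorn_prime[OF P(1) P(3) P(4)] .
    have "\<forall>k. (1::'a)^k \<notin> P"
    proof
      fix k show "(1::'a)^k \<notin> P"
      proof
        assume "(1::'a)^k \<in> P"
        hence "\<forall>r. r \<in> P" using idImul[OF P(1), of 1] by (metis mult.right_neutral power_one)
        thus False using pP unfolding prime_ideal_def by blast
      qed
    qed
    then obtain M where M: "is_ideal M" "P \<subseteq> M" "\<forall>k. (1::'a)^k \<notin> M"
      "\<forall>Q. is_ideal Q \<and> M \<subseteq> Q \<and> (\<forall>k. (1::'a)^k \<notin> Q) \<longrightarrow> Q = M"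
      using zorn_ideal[OF P(1), of 1] by blast
    have pM: "prime_ideal M" using zorn_prime[OF M(1) M(3) M(4)] .
    have "maximal_ideal M"
      unfolding maximal_ideal_def
    proof (intro conjI allI impI)
      show "is_ideal M" "M \<noteq> UNIV" using pM by (auto simp: prime_ideal_def)
      fix J assume J: "is_ideal J \<and> M \<subseteq> J"
      show "J = M \<or> J = UNIV"
      proof (cases "1 \<in> J")
        case True
        hence "J = UNIV" using J idImul[of J 1] by force
        thus ?thesis by simp
      next
        case False thus ?thesis using M(4) J by simp
      qed
    qed
    hence Mm: "M = m" using loc by (simp add: local_ring_max_def)
    have pm: "prime_ideal m" using pM Mm by simp
    have Pm: "P \<subset> m" using M(2) Mm z(1) P(3)[rule_format, of 1] by auto
    define C where "C = (\<lambda>i::nat. if i = 0 then P else m)"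
    have "\<forall>i\<le>1. prime_ideal (C i) \<and> principal x \<subseteq> C i" 
      using pP pm P(2) Pm unfolding C_def by auto
    moreover have "\<forall>i<1. C i \<subset> C (Suc i)" using Pm unfolding C_def by auto
    ultimately have "enat 1 \<in> {enat n | n. \<exists>P::nat \<Rightarrow> 'a set.
      (\<forall>i\<le>n. prime_ideal (P i) \<and> principal x \<subseteq> P i) \<and> (\<forall>i<n. P i \<subset> P (Suc i))}" by blast
    hence "enat 1 \<le> ideal_dim (principal x)" unfolding ideal_dim_def by (rule Sup_upper)
    thus False using d0 by (simp add: zero_enat_def)
  qed
  then obtain k s where ks: "z^k = x * s" unfolding principal_def by blast
  have "z^k * y = 0" using xy ks by (simp add: algebra_simps)
  thus "y = 0"
  proof (induction k arbitrary: y)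
    case 0 thus ?case by simp
  next
    case (Suc k) 
    hence "z^k * (z * y) = 0" by (simp add: algebra_simps)
    hence "z * y = 0" using Suc.IH by blast
    thus ?case using z(2) by blast
  qed
qed

lemma last_true: "Q (0::nat) \<Longrightarrow> \<not> Q e \<Longrightarrow> \<exists>j. Q j \<and> \<not> Q (Suc j)"
  by (induction e) auto

lemma ideal_gen_least: "is_ideal J \<Longrightarrow> F \<subseteq> J \<Longrightarrow> ideal_gen F \<subseteq> J"
  unfolding ideal_gen_def by blast

lemma ideal_gen_sup: "F \<subseteq> ideal_gen F"
  unfolding ideal_gen_def by blast

lemma socle_nonzero:
  fixes m I :: "'a::comm_ring_1 set"
  assumes noeth: "noetherian_ring TYPE('a)"
    and loc: "local_ring_max m"
    and prim: "m_primary m I"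
  shows "\<exists>r. r \<notin> I \<and> r \<in> colon I m"
proof -
  have im: "is_ideal m" using loc by (simp add: local_ring_max_def maximal_ideal_def)
  obtain F where F: "finite F" "m = ideal_gen F" using noeth im unfolding noetherian_ring_def by blast
  have iI: "is_ideal I" and nI: "I \<noteq> UNIV" and rad: "radical I = m"
    using prim by (auto simp: m_primary_def)
  have pw: "\<exists>e. f^e \<in> I" if "f \<in> F" for f
    using that ideal_gen_sup[of F] F(2) rad unfolding radical_def by blast
  have one: "(1::'a) \<notin> I"
  proof
    assume "1 \<in> I"
    hence "\<forall>r. r \<in> I" using idImul[OF iI, of 1] by (metis mult.right_neutral)
    thus False using nI by blast
  qed
  have "\<exists>r. r \<notin> I \<and> (\<forall>s\<in>S. r*s \<in> I)" if "finite S" "S \<subseteq> F" for S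
    using that
  proof (induction S rule: finite_induct)
    case empty thus ?case using one by blast
  next
    case (insert f S)
    then obtain r where r: "r \<notin> I" "\<forall>s\<in>S. r*s \<in> I" by auto
    obtain e where e: "f^e \<in> I" using pw insert(4) by blast
    have "r * f^e \<in> I" using idImul[OF iI e] by simp
    hence "\<exists>j. r * f^j \<notin> I \<and> \<not> (r * f^(Suc j) \<notin> I)"
      using r(1) by (intro last_true[where Q="\<lambda>j. r * f^j \<notin> I"]) auto
    then obtain j where j: "r * f^j \<notin> I" "r * f^(Suc j) \<in> I" by blast
    have "\<forall>s\<in>insert f S. (r * f^j) * s \<in> I"
    proof
      fix s assume "s \<in> insert f S"
      then show "(r * f^j) * s \<in> I"
      proof
        assume "s = f" thus ?thesis using j(2) by (simp add: algebra_simps)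
      next
        assume "s \<in> S"
        hence "f^j * (r*s) \<in> I" using r(2) idImul[OF iI] by blast
        thus ?thesis by (simp add: algebra_simps)
      qed
    qed
    thus ?case using j(1) by blast
  qed
  then obtain r where r: "r \<notin> I" "\<forall>s\<in>F. r*s \<in> I" using F(1) by blast
  have "is_ideal {s. r*s \<in> I}"
    unfolding is_ideal_def
  proof (intro conjI ballI allI)
    show "0 \<in> {s. r*s \<in> I}" using idI0[OF iI] by simp
  next
    fix a b assume "a \<in> {s. r*s \<in> I}" "b \<in> {s. r*s \<in> I}"
    thus "a + b \<in> {s. r*s \<in> I}" using idIadd[OF iI] by (simp add: distrib_left)
  next
    fix a t assume "a \<in> {s. r*s \<in> I}"
    hence "t * (r * a) \<in> I" using idImul[OF iI] by simp
    thus "t * a \<in> {s. r*s \<in> I}" by (simp add: algebra_simps)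
  qed
  hence "m \<subseteq> {s. r*s \<in> I}" using F(2) r(2) ideal_gen_least by blast
  hence "r \<in> colon I m" unfolding colon_def by blast
  thus ?thesis using r(1) by blast
qed

lemma scale_is_ideal: "is_ideal J \<Longrightarrow> is_ideal (scale_ideal a J)"
  unfolding is_ideal_def scale_ideal_def
proof (intro conjI ballI allI)
  assume J: "0 \<in> J \<and> (\<forall>a\<in>J. \<forall>b\<in>J. a + b \<in> J) \<and> (\<forall>a\<in>J. \<forall>r. r * a \<in> J)"
  show "0 \<in> {a * j |j. j \<in> J}" using J by (intro CollectI exI[of _ 0]) simp
  fix u v assume "u \<in> {a * j |j. j \<in> J}" "v \<in> {a * j |j. j \<in> J}"
  then obtain i j where "u = a*i" "v = a*j" "i \<in> J" "j \<in> J" by blast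
  thus "u + v \<in> {a * j |j. j \<in> J}" using J by (intro CollectI exI[of _ "i+j"]) (simp add: distrib_left)
next
  assume J: "0 \<in> J \<and> (\<forall>a\<in>J. \<forall>b\<in>J. a + b \<in> J) \<and> (\<forall>a\<in>J. \<forall>r. r * a \<in> J)"
  fix u t assume "u \<in> {a * j |j. j \<in> J}"
  then obtain i where "u = a*i" "i \<in> J" by blast
  thus "t * u \<in> {a * j |j. j \<in> J}" using J by (intro CollectI exI[of _ "t*i"]) (simp add: algebra_simps)
qed

lemma nz_cancel: "\<forall>y. a*y = 0 \<longrightarrow> y = 0 \<Longrightarrow> a*r = a*s \<Longrightarrow> r = (s::'a::comm_ring_1)"
  by (metis eq_iff_diff_eq_0 right_diff_distrib)

lemma scale_mem: "\<forall>y. a*y = 0 \<longrightarrow> y = 0 \<Longrightarrow> (a*r \<in> scale_ideal a J) = (r \<in> J)"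
  unfolding scale_ideal_def using nz_cancel by blast

lemma scale_sub: "\<forall>y. a*y = 0 \<longrightarrow> y = 0 \<Longrightarrow> (scale_ideal a J \<subseteq> scale_ideal a K) = (J \<subseteq> K)"
proof
  assume nz: "\<forall>y. a*y = 0 \<longrightarrow> y = 0" and s: "scale_ideal a J \<subseteq> scale_ideal a K"
  show "J \<subseteq> K"
  proof
    fix r assume "r \<in> J"
    hence "a*r \<in> scale_ideal a J" unfolding scale_ideal_def by blast
    thus "r \<in> K" using s scale_mem[OF nz] by blast
  qed
next
  assume "J \<subseteq> K" thus "scale_ideal a J \<subseteq> scale_ideal a K" unfolding scale_ideal_def by blast
qed

lemma scale_eq: "\<forall>y. a*y = 0 \<longrightarrow> y = 0 \<Longrightarrow> (scale_ideal a J = scale_ideal a K) = (J = K)"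
  using scale_sub[of a J K] scale_sub[of a K J] by blast

lemma scale_colon: "scale_ideal a (colon I m) \<subseteq> colon (scale_ideal a I) m"
  unfolding scale_ideal_def colon_def by (auto simp: mult.assoc)

lemma colon_sup: "is_ideal I \<Longrightarrow> I \<subseteq> colon I m"
  unfolding colon_def using idImul2 by blast

theorem lemma2p1:
  fixes m I :: "'a::comm_ring_1 set" and x :: 'a
  assumes noeth: "noetherian_ring TYPE('a)"
    and loc: "local_ring_max m"
    and dim1: "ideal_dim ({0} :: 'a set) = 1"
    and CM: "cohen_macaulay m"
    and prim: "m_primary m I"
    and par: "parameter m x"
  shows "(\<forall>n\<ge>1. gorenstein_quot m (scale_ideal (x ^ n) I) \<longrightarrow>
            gorenstein_quot m I \<and>
            colon (scale_ideal (x ^ n) I) m = scale_ideal (x ^ n) (colon I m))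
       \<and> (I \<subseteq> principal x \<longrightarrow> gorenstein_quot m I \<longrightarrow>
            (\<forall>n\<ge>1. gorenstein_quot m (scale_ideal (x ^ n) I)))"
proof -
  have xnz: "\<forall>y. x*y = 0 \<longrightarrow> y = 0" using param_nzd[OF loc dim1 CM par] by blast
  have nz: "\<forall>y. x^n*y = 0 \<longrightarrow> y = 0" for n
  proof (induction n)
    case 0 thus ?case by simp
  next
    case (Suc n)
    show ?case
    proof (intro allI impI)
      fix y assume "x^Suc n * y = 0"
      hence "x * (x^n * y) = 0" by (simp add: mult.assoc)
      hence "x^n * y = 0" using xnz by blast
      thus "y = 0" using Suc.IH by blast
    qed
  qed
  have iI: "is_ideal I" using prim by (simp add: m_primary_def)
  have xm: "x \<in> m" using par by (simp add: parameter_def)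
  have iC: "is_ideal (colon I m)"
    unfolding is_ideal_def colon_def
  proof (intro conjI)
    show "0 \<in> {r. \<forall>a\<in>m. r * a \<in> I}" using idI0[OF iI] by simp
    show "\<forall>u\<in>{r. \<forall>a\<in>m. r * a \<in> I}. \<forall>v\<in>{r. \<forall>a\<in>m. r * a \<in> I}. u + v \<in> {r. \<forall>a\<in>m. r * a \<in> I}"
      using idIadd[OF iI] by (simp add: distrib_right)
    show "\<forall>u\<in>{r. \<forall>a\<in>m. r * a \<in> I}. \<forall>t. t * u \<in> {r. \<forall>a\<in>m. r * a \<in> I}"
      using idImul[OF iI] by (simp add: mult.assoc)
  qed
  have part1: "gorenstein_quot m I \<and> colon (scale_ideal (x ^ n) I) m = scale_ideal (x ^ n) (colon I m)"
    if G: "gorenstein_quot m (scale_ideal (x ^ n) I)" for n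
  proof -
    let ?a = "x^n"
    obtain r where r: "r \<notin> I" "r \<in> colon I m" using socle_nonzero[OF noeth loc prim] by blast
    have IC: "I \<subset> colon I m" using r colon_sup[OF iI] by blast
    have K: "is_ideal (scale_ideal ?a (colon I m))" using scale_is_ideal[OF iC] .
    have "scale_ideal ?a I \<subseteq> scale_ideal ?a (colon I m)" using IC scale_sub[OF nz] by blast
    moreover have "scale_ideal ?a I \<noteq> scale_ideal ?a (colon I m)" using IC scale_eq[OF nz] by blast
    moreover have Gm: "\<forall>K. is_ideal K \<and> scale_ideal ?a I \<subseteq> K \<and> K \<subseteq> colon (scale_ideal ?a I) m \<longrightarrow> K = scale_ideal ?a I \<or> K = colon (scale_ideal ?a I) m"
      using G unfolding gorenstein_quot_def by blast
    ultimately have eq: "colon (scale_ideal ?a I) m = scale_ideal ?a (colon I m)"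
      using Gm[rule_format, OF conjI[OF K conjI[OF _ scale_colon[of ?a I m]]]] by blast
    have "gorenstein_quot m I"
      unfolding gorenstein_quot_def
    proof (intro conjI allI impI)
      show "I \<subset> colon I m" by fact
      fix K' assume K': "is_ideal K' \<and> I \<subseteq> K' \<and> K' \<subseteq> colon I m"
      have "is_ideal (scale_ideal ?a K')" using K' scale_is_ideal by blast
      moreover have "scale_ideal ?a I \<subseteq> scale_ideal ?a K'" "scale_ideal ?a K' \<subseteq> colon (scale_ideal ?a I) m"
        using K' scale_sub[OF nz] eq by auto
      ultimately have "scale_ideal ?a K' = scale_ideal ?a I \<or> scale_ideal ?a K' = colon (scale_ideal ?a I) m"
        using Gm by blast
      hence "scale_ideal ?a K' = scale_ideal ?a I \<or> scale_ideal ?a K' = scale_ideal ?a (colon I m)"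
        using eq by simp
      thus "K' = I \<or> K' = colon I m" using scale_eq[OF nz] by blast
    qed
    thus ?thesis using eq by blast
  qed
  have part2: "gorenstein_quot m (scale_ideal (x ^ n) I)"
    if sub: "I \<subseteq> principal x" and G: "gorenstein_quot m I" for n
  proof -
    let ?a = "x^n"
    have eq: "colon (scale_ideal ?a I) m = scale_ideal ?a (colon I m)"
    proof
      show "colon (scale_ideal ?a I) m \<subseteq> scale_ideal ?a (colon I m)"
      proof
        fix r assume r: "r \<in> colon (scale_ideal ?a I) m"
        hence "r * x \<in> scale_ideal ?a I" using xm unfolding colon_def by simp
        hence "r * x \<in> {?a * j |j. j \<in> I}" unfolding scale_ideal_def by simp
        then obtain i where i: "r * x = ?a * i" "i \<in> I" by blast
        have "i \<in> {x * r |r. True}" using sub i(2) unfolding principal_def by blast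
        then obtain t where t: "i = x * t" by blast
        have "x * r = r * x" by (simp add: mult.commute)
        also have "\<dots> = ?a * (x * t)" using i(1) t by simp
        also have "\<dots> = x * (?a * t)" by (rule mult.left_commute)
        finally have "x * r = x * (?a * t)" .
        hence rt: "r = ?a * t" using nz_cancel[OF xnz] by blast
        have tc: "t \<in> colon I m"
          unfolding colon_def
        proof (intro CollectI ballI)
          fix y assume y: "y \<in> m"
          have "r * y \<in> scale_ideal ?a I" using r y unfolding colon_def by simp
          moreover have "r * y = ?a * (t * y)" using rt by (simp add: mult.assoc)
          ultimately have "?a * (t * y) \<in> scale_ideal ?a I" by simp
          thus "t * y \<in> I" using scale_mem[OF nz, where r="t*y" and J=I] by simp
        qed
        show "r \<in> scale_ideal ?a (colon I m)" unfolding scale_ideal_def rt using tc by blast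
      qed
    qed (rule scale_colon)
    show ?thesis
      unfolding gorenstein_quot_def
    proof (intro conjI allI impI)
      have IC: "I \<subset> colon I m" using G unfolding gorenstein_quot_def by blast
      have s1: "scale_ideal ?a I \<subseteq> scale_ideal ?a (colon I m)" using IC scale_sub[OF nz, where J=I and K="colon I m"] by blast
      have s2: "scale_ideal ?a I \<noteq> scale_ideal ?a (colon I m)" using IC scale_eq[OF nz, where J=I and K="colon I m"] by blast
      show "scale_ideal ?a I \<subset> colon (scale_ideal ?a I) m"
        unfolding eq using s1 s2 by blast
      fix K assume K: "is_ideal K \<and> scale_ideal ?a I \<subseteq> K \<and> K \<subseteq> colon (scale_ideal ?a I) m"
      define K' where "K' = {s. ?a * s \<in> K}"
      have iK: "is_ideal K" using K by blast
      have iK': "is_ideal K'"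
        unfolding is_ideal_def K'_def
      proof (intro conjI ballI allI CollectI)
        show "?a * 0 \<in> K" using idI0[OF iK] by simp
      next
        fix u v assume "u \<in> {s. ?a * s \<in> K}" "v \<in> {s. ?a * s \<in> K}"
        thus "?a * (u + v) \<in> K" using idIadd[OF iK] by (simp add: distrib_left)
      next
        fix u t assume "u \<in> {s. ?a * s \<in> K}"
        hence "t * (?a * u) \<in> K" using idImul[OF iK] by simp
        thus "?a * (t * u) \<in> K" by (simp add: algebra_simps)
      qed
      have KK: "K = scale_ideal ?a K'"
      proof
        show "K \<subseteq> scale_ideal ?a K'"
        proof
          fix y assume yK: "y \<in> K"
          hence "y \<in> colon (scale_ideal ?a I) m" using K by blast
          hence "y \<in> {?a * j |j. j \<in> colon I m}" using eq unfolding scale_ideal_def by simp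
          then obtain s where ys: "y = ?a * s" by blast
          hence "s \<in> K'" using yK unfolding K'_def by simp
          thus "y \<in> scale_ideal ?a K'" unfolding scale_ideal_def ys by blast
        qed
      next
        show "scale_ideal ?a K' \<subseteq> K" unfolding scale_ideal_def K'_def by blast
      qed
      have "scale_ideal ?a I \<subseteq> scale_ideal ?a K'" using K by (simp add: KK[symmetric])
      hence t1: "I \<subseteq> K'" using scale_sub[OF nz, where J=I and K=K'] by blast
      have "scale_ideal ?a K' \<subseteq> scale_ideal ?a (colon I m)" using K by (simp add: KK[symmetric] eq[symmetric])
      hence t2: "K' \<subseteq> colon I m" using scale_sub[OF nz, where J=K' and K="colon I m"] by blast
      have GI: "\<forall>K. is_ideal K \<and> I \<subseteq> K \<and> K \<subseteq> colon I m \<longrightarrow> K = I \<or> K = colon I m"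
        using G unfolding gorenstein_quot_def by blast
      have "K' = I \<or> K' = colon I m" using GI[rule_format, OF conjI[OF iK' conjI[OF t1 t2]]] .
      thus "K = scale_ideal ?a I \<or> K = colon (scale_ideal ?a I) m"
      proof
        assume "K' = I" thus ?thesis using KK by simp
      next
        assume "K' = colon I m" thus ?thesis using KK eq by simp
      qed
    qed
  qed
  show ?thesis using part1 part2 by blast
qed

end
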